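(* Fix $\beta>0$ and for positive integers $p$ set $x_p=\beta^p/(\beta+1)^{p+1}$. Then $$\Phi_\beta(p,0)=\frac{\beta}{\beta+1}(1+x_p)+x_p\,\varepsilon_p,$$ where $\varepsilon_p\to 0$ as $p\to\infty$.
   Context: For $\beta>0$, $W_\beta$ is the random walk on $\mathbb{Z}^2$ starting at the origin which, independently at each step, moves from $(a,b)$ to $(a+1,b)$ with probability $1/(\beta+1)$ and to $(a,b+1)$ with probability $\beta/(\beta+1)$. For a nonnegative integer $p$, $\Phi_\beta(p,0)$ is the probability that $W_\beta$ visits at least one of the lattice points $(n,pn+1)$, $n\ge 0$. *)

theory Defs
  imports "HOL-Probability.Probability"
begin

text \<open>A step of the walk is a boolean: True = up step (a,b) to (a,b+1), taken with
probability beta/(beta+1); False = right step (a,b) to (a+1,b), with probability 1/(beta+1).\<close>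

definition step_dist :: "real \<Rightarrow> bool pmf" where
  "step_dist \<beta> = bernoulli_pmf (\<beta> / (\<beta> + 1))"

definition walk_space :: "real \<Rightarrow> bool stream measure" where
  "walk_space \<beta> = stream_space (measure_pmf (step_dist \<beta>))"

definition walk_pos :: "bool stream \<Rightarrow> nat \<Rightarrow> nat \<times> nat" where
  "walk_pos \<omega> k = (length (filter (\<lambda>b. \<not> b) (stake k \<omega>)), length (filter (\<lambda>b. b) (stake k \<omega>)))"

text \<open>Phi beta p = Phi_beta(p,0): probability that the walk visits some point (n, p n + 1), n >= 0.\<close>
definition Phi :: "real \<Rightarrow> nat \<Rightarrow> real" where
  "Phi \<beta> p = measure (walk_space \<beta>) {\<omega>. \<exists>k n. walk_pos \<omega> k = (n, p * n + 1)}"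

end

theory Submission
  imports Defs
begin

definition nF :: "bool list \<Rightarrow> nat" where "nF xs = length (filter Not xs)"

lemma meas_transfer:
  "f \<in> measurable (stream_space (count_space UNIV)) N \<Longrightarrow> f \<in> measurable (stream_space (measure_pmf D)) N"
proof -
  have "measurable (stream_space (measure_pmf D)) N = measurable (stream_space (count_space UNIV)) N"
    by (intro measurable_cong_sets sets_stream_space_cong) simp_all
  then show "f \<in> measurable (stream_space (count_space UNIV)) N \<Longrightarrow> ?thesis" by simp
qed

lemma gen:
  fixes q z :: real
  assumes q: "0 \<le> q" "q \<le> 1" and z: "0 \<le> z"
  shows "(\<integral>\<^sup>+\<omega>. ennreal (z ^ nF (stake k \<omega>)) \<partial>stream_space (measure_pmf (bernoulli_pmf q)))
         = ennreal ((q + (1-q)*z)^k)"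
proof (induction k)
  case 0
  interpret S: prob_space "stream_space (measure_pmf (bernoulli_pmf q))"
    by (rule prob_space.prob_space_stream_space[OF prob_space_measure_pmf])
  show ?case by (simp add: nF_def S.emeasure_space_1)
next
  case (Suc k)
  have m: "(\<lambda>\<omega>. ennreal (z ^ nF (stake k \<omega>))) \<in> borel_measurable (stream_space (measure_pmf (bernoulli_pmf q)))" for k
    by (rule meas_transfer) measurable
  have "(\<integral>\<^sup>+\<omega>. ennreal (z ^ nF (stake (Suc k) \<omega>)) \<partial>stream_space (measure_pmf (bernoulli_pmf q)))
    = (\<integral>\<^sup>+x. (\<integral>\<^sup>+X. ennreal (z ^ nF (stake (Suc k) (x ## X))) \<partial>stream_space (measure_pmf (bernoulli_pmf q))) \<partial>measure_pmf (bernoulli_pmf q))"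
    by (rule prob_space.nn_integral_stream_space[OF prob_space_measure_pmf]) (rule m)
  also have "\<dots> = (\<integral>\<^sup>+x. ennreal (if x then 1 else z) * ennreal ((q + (1-q)*z)^k) \<partial>measure_pmf (bernoulli_pmf q))"
  proof (rule nn_integral_cong)
    fix x
    have "(\<integral>\<^sup>+X. ennreal (z ^ nF (stake (Suc k) (x ## X))) \<partial>stream_space (measure_pmf (bernoulli_pmf q)))
       = (\<integral>\<^sup>+X. ennreal (if x then 1 else z) * ennreal (z ^ nF (stake k X)) \<partial>stream_space (measure_pmf (bernoulli_pmf q)))"
      by (rule nn_integral_cong) (simp add: nF_def ennreal_mult' z)
    also have "\<dots> = ennreal (if x then 1 else z) * ennreal ((q + (1-q)*z)^k)"
      by (subst nn_integral_cmult) (use m Suc in auto)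
    finally show "(\<integral>\<^sup>+X. ennreal (z ^ nF (stake (Suc k) (x ## X))) \<partial>stream_space (measure_pmf (bernoulli_pmf q))) = ennreal (if x then 1 else z) * ennreal ((q + (1-q)*z)^k)" .
  qed
  also have "\<dots> = ennreal ((q + (1-q)*z)^Suc k)"
    using q z by (simp add: ennreal_mult'[symmetric] ennreal_plus[symmetric] del: ennreal_plus ) (simp add: algebra_simps)
  finally show ?case .
qed

lemma pred_sets:
  assumes "Measurable.pred (stream_space (count_space UNIV)) P"
  shows "{\<omega>. P \<omega>} \<in> sets (stream_space (measure_pmf D))"
proof -
  have "sets (stream_space (measure_pmf D)) = sets (stream_space (count_space UNIV))"
    by (intro sets_stream_space_cong) simp
  moreover have "{\<omega>. P \<omega>} \<in> sets (stream_space (count_space UNIV))"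
    using measurable_sets[OF assms, of "{True}"] by (simp add: space_stream_space vimage_def)
  ultimately show ?thesis by simp
qed

lemma cyl:
  fixes q :: real
  assumes q: "0 \<le> q" "q \<le> 1"
  shows "emeasure (stream_space (measure_pmf (bernoulli_pmf q))) {\<omega>. stake (length xs) \<omega> = xs}
     = ennreal (prod_list (map (pmf (bernoulli_pmf q)) xs))"
proof (induction xs)
  case Nil
  interpret S: prob_space "stream_space (measure_pmf (bernoulli_pmf q))"
    by (rule prob_space.prob_space_stream_space[OF prob_space_measure_pmf])
  have u: "space (stream_space (measure_pmf (bernoulli_pmf q))) = UNIV"
    by (simp add: space_stream_space)
  show ?case using S.emeasure_space_1 u by simp
next
  case (Cons a xs)
  let ?S = "stream_space (measure_pmf (bernoulli_pmf q))"
  have s1: "{\<omega>. stake (length (a#xs)) \<omega> = a#xs} \<in> sets ?S"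
    by (rule pred_sets) measurable
  have s2: "{\<omega>. stake (length xs) \<omega> = xs} \<in> sets ?S"
    by (rule pred_sets) measurable
  have "emeasure ?S {\<omega>. stake (length (a#xs)) \<omega> = a#xs}
      = (\<integral>\<^sup>+\<omega>. indicator {\<omega>. stake (length (a#xs)) \<omega> = a#xs} \<omega> \<partial>?S)"
    using s1 by simp
  also have "\<dots> = (\<integral>\<^sup>+x. (\<integral>\<^sup>+X. indicator {\<omega>. stake (length (a#xs)) \<omega> = a#xs} (x ## X) \<partial>?S) \<partial>measure_pmf (bernoulli_pmf q))"
    by (rule prob_space.nn_integral_stream_space[OF prob_space_measure_pmf]) (use s1 in simp)
  also have "\<dots> = (\<integral>\<^sup>+x. indicator {a} x * emeasure ?S {\<omega>. stake (length xs) \<omega> = xs} \<partial>measure_pmf (bernoulli_pmf q))"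
  proof (rule nn_integral_cong)
    fix x
    have "(\<integral>\<^sup>+X. indicator {\<omega>. stake (length (a#xs)) \<omega> = a#xs} (x ## X) \<partial>?S)
       = (\<integral>\<^sup>+X. indicator {a} x * indicator {\<omega>. stake (length xs) \<omega> = xs} X \<partial>?S)"
      by (rule nn_integral_cong) (simp split: split_indicator)
    also have "\<dots> = indicator {a} x * emeasure ?S {\<omega>. stake (length xs) \<omega> = xs}"
      using s2 by (subst nn_integral_cmult) auto
    finally show "(\<integral>\<^sup>+X. indicator {\<omega>. stake (length (a#xs)) \<omega> = a#xs} (x ## X) \<partial>?S) = indicator {a} x * emeasure ?S {\<omega>. stake (length xs) \<omega> = xs}" .
  qed
  also have "\<dots> = ennreal (prod_list (map (pmf (bernoulli_pmf q)) (a#xs)))"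
    using q Cons.IH
    by (cases a) (simp_all add: ennreal_mult'[symmetric] prod_list_nonneg mult.commute)
  finally show ?case .
qed

lemma nF_zero: "nF xs = 0 \<Longrightarrow> xs = replicate (length xs) True"
  by (induction xs) (auto simp: nF_def split: if_splits)

lemma comb:
  assumes "walk_pos \<omega> k = (n, p*n+1)"
  shows "stake 1 \<omega> = [True] \<or> stake (p+2) \<omega> = False # replicate (p+1) True \<or>
         (n \<ge> 2 \<and> nF (stake (n*(p+1)+1) \<omega>) = n)"
proof -
  have h1: "nF (stake k \<omega>) = n" and h2: "length (filter (\<lambda>b. b) (stake k \<omega>)) = p*n+1"
    using assms by (auto simp: walk_pos_def nF_def)
  have "length (filter (\<lambda>b. b) (stake k \<omega>)) + nF (stake k \<omega>) = k"
    using sum_length_filter_compl[of "\<lambda>b. b" "stake k \<omega>"] by (simp add: nF_def)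
  then have k: "k = n*(p+1)+1" using h1 h2 by (auto simp: algebra_simps)
  consider "n = 0" | "n = 1" | "n \<ge> 2" by linarith
  then show ?thesis
  proof cases
    case 1
    then have "stake 1 \<omega> = [shd \<omega>]" "nF (stake 1 \<omega>) = 0" using h1 k by auto
    then show ?thesis by (auto simp: nF_def split: if_splits)
  next
    case 2
    then have e: "nF (stake (p+2) \<omega>) = 1" using h1 k by simp
    have st: "stake (p+2) \<omega> = shd \<omega> # stake (p+1) (stl \<omega>)"
      by simp
    show ?thesis
    proof (cases "shd \<omega>")
      case True
      then show ?thesis by simp
    next
      case False
      then have "nF (stake (p+1) (stl \<omega>)) = 0" using e st by (simp add: nF_def)
      from nF_zero[OF this] have "stake (p+1) (stl \<omega>) = replicate (p+1) True" by simp
      then show ?thesis using st False by simp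
    qed
  next
    case 3
    then show ?thesis using h1 k by simp
  qed
qed

lemma E_sets: "{\<omega>. \<exists>k n. walk_pos \<omega> k = (n, p*n+1)} \<in> sets (stream_space (measure_pmf D))"
  unfolding walk_pos_def by (rule pred_sets) measurable

lemma lower:
  fixes q :: real
  assumes q: "0 < q" "q < 1"
  shows "q + (1-q)*q^(p+1) \<le> measure (stream_space (measure_pmf (bernoulli_pmf q))) {\<omega>. \<exists>k n. walk_pos \<omega> k = (n, p*n+1)}"
proof -
  let ?S = "stream_space (measure_pmf (bernoulli_pmf q))"
  interpret S: prob_space ?S
    by (rule prob_space.prob_space_stream_space[OF prob_space_measure_pmf])
  define A1 where "A1 = {\<omega>::bool stream. stake (length [True]) \<omega> = [True]}"
  define A2 where "A2 = {\<omega>::bool stream. stake (length (False # replicate (p+1) True)) \<omega> = False # replicate (p+1) True}"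
  have A1s: "A1 \<in> sets ?S" unfolding A1_def by (rule pred_sets) measurable
  have A2s: "A2 \<in> sets ?S" unfolding A2_def by (rule pred_sets) measurable
  have "emeasure ?S A1 = ennreal q" unfolding A1_def using q by (subst cyl) auto
  then have m1: "measure ?S A1 = q" using q by (simp add: S.emeasure_eq_measure)
  have "emeasure ?S A2 = ennreal ((1-q)*q^(p+1))" unfolding A2_def using q
    by (subst cyl) (auto simp: map_replicate prod_list_replicate)
  then have m2: "measure ?S A2 = (1-q)*q^(p+1)" using q by (simp add: S.emeasure_eq_measure)
  have disj: "A1 \<inter> A2 = {}" unfolding A1_def A2_def by auto
  have sub: "A1 \<union> A2 \<subseteq> {\<omega>. \<exists>k n. walk_pos \<omega> k = (n, p*n+1)}"
  proof
    fix \<omega> assume "\<omega> \<in> A1 \<union> A2"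
    then show "\<omega> \<in> {\<omega>. \<exists>k n. walk_pos \<omega> k = (n, p*n+1)}"
    proof
      assume "\<omega> \<in> A1"
      then have "walk_pos \<omega> 1 = (0, p*0+1)" unfolding A1_def walk_pos_def by simp
      then show ?thesis by blast
    next
      assume "\<omega> \<in> A2"
      then have "stake (p+2) \<omega> = False # replicate (p+1) True" unfolding A2_def by simp
      then have "walk_pos \<omega> (p+2) = (1, p*1+1)" unfolding walk_pos_def by simp
      then show ?thesis by blast
    qed
  qed
  have "q + (1-q)*q^(p+1) = measure ?S (A1 \<union> A2)"
    using S.finite_measure_Union[OF A1s A2s disj] m1 m2 by simp
  also have "\<dots> \<le> measure ?S {\<omega>. \<exists>k n. walk_pos \<omega> k = (n, p*n+1)}"
    by (rule S.finite_measure_mono[OF sub E_sets])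
  finally show ?thesis .
qed

lemma Bbound:
  fixes q z :: real
  assumes q: "0 \<le> q" "q \<le> 1" and z: "0 < z"
  shows "emeasure (stream_space (measure_pmf (bernoulli_pmf q))) {\<omega>. nF (stake (n*(p+1)+1) \<omega>) = n}
     \<le> ennreal ((q+(1-q)*z) * ((q+(1-q)*z)^(p+1)/z)^n)"
proof -
  let ?S = "stream_space (measure_pmf (bernoulli_pmf q))"
  let ?k = "n*(p+1)+1"
  let ?c = "q+(1-q)*z"
  have Bs: "{\<omega>. nF (stake ?k \<omega>) = n} \<in> sets ?S" by (rule pred_sets) measurable
  have m: "(\<lambda>\<omega>. ennreal (z ^ nF (stake ?k \<omega>))) \<in> borel_measurable ?S"
    by (rule meas_transfer) measurable
  have "emeasure ?S {\<omega>. nF (stake ?k \<omega>) = n} = (\<integral>\<^sup>+\<omega>. indicator {\<omega>. nF (stake ?k \<omega>) = n} \<omega> \<partial>?S)"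
    using Bs by simp
  also have "\<dots> \<le> (\<integral>\<^sup>+\<omega>. ennreal (z ^ nF (stake ?k \<omega>)) * ennreal (1 / z^n) \<partial>?S)"
  proof (rule nn_integral_mono)
    fix \<omega>
    show "indicator {\<omega>. nF (stake ?k \<omega>) = n} \<omega> \<le> ennreal (z ^ nF (stake ?k \<omega>)) * ennreal (1 / z^n)"
      using z by (auto split: split_indicator simp: ennreal_mult'[symmetric])
  qed
  also have "\<dots> = ennreal (?c ^ ?k) * ennreal (1 / z^n)"
  proof -
    have g: "(\<integral>\<^sup>+\<omega>. ennreal (z ^ nF (stake ?k \<omega>)) \<partial>?S) = ennreal (?c ^ ?k)"
      by (rule gen) (use q z in auto)
    show ?thesis by (subst nn_integral_multc[OF m]) (simp only: g)
  qed
  also have "\<dots> = ennreal (?c ^ ?k / z^n)"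
    using z q by (simp add: ennreal_mult'[symmetric])
  also have "?c ^ ?k / z^n = ?c * (?c^(p+1)/z)^n"
  proof -
    have "?c ^ ?k = ?c * (?c^(p+1))^n"
      by (metis power_add power_mult mult.commute power_one_right)
    then show ?thesis by (simp add: power_divide)
  qed
  finally show ?thesis .
qed

lemma upper:
  fixes q z :: real
  assumes q: "0 < q" "q < 1" and z: "0 < z"
  and w: "(q+(1-q)*z)^(p+1)/z < 1"
  shows "measure (stream_space (measure_pmf (bernoulli_pmf q))) {\<omega>. \<exists>k n. walk_pos \<omega> k = (n, p*n+1)}
     \<le> q + (1-q)*q^(p+1) + (q+(1-q)*z) * ((q+(1-q)*z)^(p+1)/z)^2 / (1 - (q+(1-q)*z)^(p+1)/z)"
proof -
  let ?S = "stream_space (measure_pmf (bernoulli_pmf q))"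
  interpret S: prob_space ?S
    by (rule prob_space.prob_space_stream_space[OF prob_space_measure_pmf])
  define c where "c = q+(1-q)*z"
  define w where "w = c^(p+1)/z"
  have c0: "c \<ge> 0" unfolding c_def using q z by simp
  have w0: "w \<ge> 0" unfolding w_def using c0 z by simp
  have w1: "w < 1" using w unfolding w_def c_def .
  define E where "E = {\<omega>::bool stream. \<exists>k n. walk_pos \<omega> k = (n, p*n+1)}"
  define A1 where "A1 = {\<omega>::bool stream. stake (length [True]) \<omega> = [True]}"
  define A2 where "A2 = {\<omega>::bool stream. stake (length (False # replicate (p+1) True)) \<omega> = False # replicate (p+1) True}"
  define B where "B = (\<lambda>m. {\<omega>. nF (stake ((m+2)*(p+1)+1) \<omega>) = m+2})"
  have A1s: "A1 \<in> sets ?S" unfolding A1_def by (rule pred_sets) measurable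
  have A2s: "A2 \<in> sets ?S" unfolding A2_def by (rule pred_sets) measurable
  have Bs: "B m \<in> sets ?S" for m unfolding B_def by (rule pred_sets) measurable
  have e1: "emeasure ?S A1 = ennreal q" unfolding A1_def using q by (subst cyl) auto
  have e2: "emeasure ?S A2 = ennreal ((1-q)*q^(p+1))" unfolding A2_def using q
    by (subst cyl) (auto simp: map_replicate prod_list_replicate)
  have sub: "E \<subseteq> A1 \<union> A2 \<union> (\<Union>m. B m)"
  proof
    fix \<omega> assume "\<omega> \<in> E"
    then obtain k n where "walk_pos \<omega> k = (n, p*n+1)" unfolding E_def by blast
    from comb[OF this] show "\<omega> \<in> A1 \<union> A2 \<union> (\<Union>m. B m)"
    proof (elim disjE conjE)
      assume "stake 1 \<omega> = [True]" then show ?thesis unfolding A1_def by simp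
    next
      assume "stake (p+2) \<omega> = False # replicate (p+1) True" then show ?thesis unfolding A2_def by simp
    next
      assume n2: "2 \<le> n" and hB: "nF (stake (n*(p+1)+1) \<omega>) = n"
      have eq: "n - 2 + 2 = n" using n2 by simp
      have "\<omega> \<in> B (n-2)" unfolding B_def eq mem_Collect_eq by (rule hB)
      then show ?thesis by blast
    qed
  qed
  have "emeasure ?S E \<le> emeasure ?S (A1 \<union> A2 \<union> (\<Union>m. B m))"
    by (rule emeasure_mono[OF sub]) (use A1s A2s Bs in auto)
  also have "\<dots> \<le> emeasure ?S (A1 \<union> A2) + emeasure ?S (\<Union>m. B m)"
    by (rule emeasure_subadditive) (use A1s A2s Bs in auto)
  also have "\<dots> \<le> emeasure ?S A1 + emeasure ?S A2 + (\<Sum>m. emeasure ?S (B m))"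
    by (intro add_mono emeasure_subadditive emeasure_subadditive_countably) (use A1s A2s Bs in auto)
  also have "(\<Sum>m. emeasure ?S (B m)) \<le> (\<Sum>m. ennreal (c * w^(m+2)))"
  proof (rule suminf_le)
    fix m
    show "emeasure ?S (B m) \<le> ennreal (c * w^(m+2))"
      unfolding B_def c_def w_def using Bbound[OF less_imp_le[OF q(1)] less_imp_le[OF q(2)] z, of "m+2" p] .
  qed auto
  also have "(\<Sum>m. ennreal (c * w^(m+2))) = ennreal (\<Sum>m. c * w^(m+2))"
  proof (rule suminf_ennreal2)
    show "summable (\<lambda>m. c * w^(m+2))"
      using w0 w1 by (intro summable_mult summable_ignore_initial_segment summable_geometric) simp
  qed (use c0 w0 in auto)
  also have "(\<Sum>m. c * w^(m+2)) = c * w^2 / (1 - w)"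
  proof -
    have "(\<Sum>m. c * w^(m+2)) = (\<Sum>m. (c*w^2) * w^m)" by (simp add: power_add power2_eq_square mult_ac)
    also have "\<dots> = c*w^2 * (\<Sum>m. w^m)"
      using w0 w1 by (intro suminf_mult summable_geometric) simp
    also have "\<dots> = c*w^2 / (1-w)" using w0 w1 by (simp add: suminf_geometric)
    finally show ?thesis .
  qed
  finally have "emeasure ?S E \<le> ennreal q + ennreal ((1-q)*q^(p+1)) + ennreal (c * w^2 / (1 - w))"
    using e1 e2 by simp
  also have "\<dots> = ennreal (q + (1-q)*q^(p+1) + c * w^2 / (1 - w))"
    using q c0 w0 w1 by (simp add: ennreal_plus[symmetric] del: ennreal_plus)
  finally have X: "emeasure ?S E \<le> ennreal (q + (1-q)*q^(p+1) + c * w^2 / (1 - w))" .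
  then have X2: "ennreal (measure ?S E) \<le> ennreal (q + (1-q)*q^(p+1) + c * w^2 / (1 - w))"
    by (simp only: S.emeasure_eq_measure)
  have T0: "0 \<le> q + (1-q)*q^(p+1) + c * w^2 / (1 - w)" using q c0 w0 w1 by simp
  have "measure ?S E \<le> q + (1-q)*q^(p+1) + c * w^2 / (1 - w)"
    using X2 ennreal_le_iff[OF T0] by blast
  then show ?thesis unfolding E_def c_def w_def .
qed

lemma pow_bound:
  assumes "p \<ge> (1::nat)"
  shows "(1 + 1/real p)^(p+1) \<le> exp 2"
proof -
  have "(1 + 1/real p)^(p+1) \<le> (exp (1/real p))^(p+1)"
    by (rule power_mono) (auto intro: add_nonneg_nonneg)
  also have "\<dots> = exp (real (p+1) * (1/real p))"
    by (simp only: exp_of_nat_mult)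
  also have "\<dots> \<le> exp 2"
    using assms by (simp add: field_simps)
  finally show ?thesis .
qed

lemma eps_bound:
  fixes q :: real
  assumes q: "0 < q" "q < 1" and p: "p \<ge> (1::nat)"
  and small: "exp 2 * real p * q^p \<le> 1/2"
  shows "(measure (stream_space (measure_pmf (bernoulli_pmf q))) {\<omega>. \<exists>k n. walk_pos \<omega> k = (n, p*n+1)}
          - q - (1-q)*q^(p+1)) / ((1-q)*q^p) \<le> 4 * (exp 2)^2 * (real p)^2 * q^p"
proof -
  define K :: real where "K = exp 2"
  have K0: "K > 0" unfolding K_def by simp
  define z where "z = q/((1-q)*real p)"
  have pp: "real p \<ge> 1" using p by simp
  have z0: "z > 0" unfolding z_def using q pp by simp
  define c where "c = q+(1-q)*z"
  define w where "w = c^(p+1)/z"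
  have c_eq: "c = q * (1 + 1/real p)" unfolding c_def z_def using q pp by (simp add: field_simps)
  have c0: "0 \<le> c" "c \<le> 2" 
  proof -
    show "0 \<le> c" unfolding c_eq using q pp by simp
    have "1/real p \<le> 1" using pp by simp
    then have "1 + 1/real p \<le> 2" by simp
    then have "q * (1 + 1/real p) \<le> 1 * 2" using q by (intro mult_mono) auto
    then show "c \<le> 2" unfolding c_eq by simp
  qed
  have w_eq: "w = q^p * (1-q) * real p * (1 + 1/real p)^(p+1)"
  proof -
    define a where "a = (1 + 1/real p)^(p+1)"
    have "c^(p+1) = q^(p+1) * a" unfolding c_eq a_def by (simp add: power_mult_distrib)
    then have "w = q^(p+1) * a / (q/((1-q)*real p))" unfolding w_def z_def by simp
    also have "\<dots> = q^p * (1-q) * real p * a" using q pp by (simp add: field_simps)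
    finally show ?thesis unfolding a_def .
  qed
  have w0: "0 \<le> w" unfolding w_eq using q by simp
  have "w \<le> q^p * (1-q) * real p * K"
    unfolding w_eq K_def using pow_bound[OF p] q by (intro mult_left_mono) auto
  also have "\<dots> \<le> K * real p * q^p"
  proof -
    have "q^p * (1-q) * real p * K \<le> q^p * 1 * real p * K"
      by (intro mult_right_mono mult_left_mono) (use q K0 in auto)
    then show ?thesis by (simp add: mult_ac)
  qed
  finally have wK: "w \<le> K * real p * q^p" .
  then have w12: "w \<le> 1/2" using small unfolding K_def by simp
  have wK2: "w \<le> q^p * (1-q) * real p * K"
    unfolding w_eq K_def using pow_bound[OF p] q by (intro mult_left_mono) auto
  have up: "measure (stream_space (measure_pmf (bernoulli_pmf q))) {\<omega>. \<exists>k n. walk_pos \<omega> k = (n, p*n+1)}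
     \<le> q + (1-q)*q^(p+1) + c * w^2 / (1 - w)"
  proof -
    have "w < 1" using w12 by simp
    then show ?thesis using upper[OF q z0, of p] unfolding c_def w_def by blast
  qed
  have "c * w^2 / (1 - w) \<le> 2 * c * w^2"
  proof -
    have "c * w^2 / (1 - w) \<le> c * w^2 / (1/2)"
      using w12 w0 c0 by (intro divide_left_mono) auto
    then show ?thesis by simp
  qed
  also have "\<dots> \<le> 4 * w^2" using c0 by (intro mult_right_mono) auto
  also have "\<dots> \<le> 4 * (q^p * (1-q) * real p * K)^2"
    using w0 wK2 by (intro mult_left_mono power_mono) auto
  finally have num: "c * w^2 / (1 - w) \<le> 4 * (q^p * (1-q) * real p * K)^2" .
  have den: "(1-q)*q^p > 0" using q by simp
  have "(measure (stream_space (measure_pmf (bernoulli_pmf q))) {\<omega>. \<exists>k n. walk_pos \<omega> k = (n, p*n+1)}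
          - q - (1-q)*q^(p+1)) / ((1-q)*q^p) \<le> 4 * (q^p * (1-q) * real p * K)^2 / ((1-q)*q^p)"
    using up num den by (intro divide_right_mono) auto
  also have "\<dots> = 4 * K^2 * (real p)^2 * q^p * (1-q)"
    using q by (simp add: power2_eq_square field_simps)
  also have "\<dots> \<le> 4 * K^2 * (real p)^2 * q^p"
    using q by (intro mult_left_le) auto
  finally show ?thesis unfolding K_def .
qed

lemma lim1:
  fixes q :: real assumes "0 < q" "q < 1"
  shows "(\<lambda>n. real n * q^n) \<longlonglongrightarrow> 0"
  using powser_times_n_limit_0[of q] assms by simp

lemma lim2:
  fixes q :: real assumes q: "0 < q" "q < 1"
  shows "(\<lambda>n. (real n)^2 * q^n) \<longlonglongrightarrow> 0"
proof -
  have s: "0 < sqrt q" "sqrt q < 1" using q by auto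
  have "(\<lambda>n. (real n * sqrt q ^ n)^2) \<longlonglongrightarrow> 0^2"
    by (intro tendsto_power lim1 s)
  moreover have "(real n * sqrt q ^ n)^2 = (real n)^2 * q^n" for n
    using q by (simp add: power_mult_distrib power_mult[symmetric] mult.commute[of n 2] power_mult)
  ultimately show ?thesis by simp
qed

theorem mainTheorem10:
  fixes \<beta> :: real
  assumes "\<beta> > 0"
  shows "\<exists>\<epsilon> :: nat \<Rightarrow> real. \<epsilon> \<longlonglongrightarrow> 0 \<and>
    (\<forall>p \<ge> 1. Phi \<beta> p = \<beta> / (\<beta> + 1) * (1 + \<beta> ^ p / (\<beta> + 1) ^ (p + 1))
                         + \<beta> ^ p / (\<beta> + 1) ^ (p + 1) * \<epsilon> p)"
proof -
  define q where "q = \<beta>/(\<beta>+1)"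
  have q: "0 < q" "q < 1" unfolding q_def using assms by auto
  have oneq: "1 - q = 1/(\<beta>+1)" unfolding q_def using assms by (simp add: field_simps)
  define M where "M p = measure (stream_space (measure_pmf (bernoulli_pmf q))) {\<omega>. \<exists>k n. walk_pos \<omega> k = (n, p*n+1)}" for p
  have Phi_eq: "Phi \<beta> p = M p" for p
    unfolding Phi_def walk_space_def step_dist_def M_def q_def ..
  have x_eq: "\<beta>^p/(\<beta>+1)^(p+1) = (1-q)*q^p" for p
    using assms by (subst oneq) (simp add: q_def power_divide field_simps)
  define \<epsilon> where "\<epsilon> p = (M p - q - (1-q)*q^(p+1)) / ((1-q)*q^p)" for p
  have den: "(1-q)*q^p > 0" for p using q by simp
  have ident: "Phi \<beta> p = q * (1 + (1-q)*q^p) + (1-q)*q^p * \<epsilon> p" for p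
  proof -
    have e: "(1-q)*q^p * \<epsilon> p = M p - q - (1-q)*q^(p+1)"
      unfolding \<epsilon>_def using den[of p] q by simp
    have "q*(1+(1-q)*q^p) = q + (1-q)*q^(p+1)" by (simp add: algebra_simps)
    then show ?thesis unfolding Phi_eq e by simp
  qed
  have lo: "\<forall>\<^sub>F p in sequentially. 0 \<le> \<epsilon> p"
  proof (rule always_eventually, rule allI)
    fix p
    have "q + (1-q)*q^(p+1) \<le> M p" unfolding M_def by (rule lower[OF q])
    then show "0 \<le> \<epsilon> p" unfolding \<epsilon>_def using den[of p] by simp
  qed
  have ev_small: "\<forall>\<^sub>F p in sequentially. exp 2 * (real p * q^p) < 1/2"
    using lim1[OF q] by (intro order_tendstoD(2)) (auto intro: tendsto_mult_right_zero)
  have hi: "\<forall>\<^sub>F p in sequentially. \<epsilon> p \<le> 4 * (exp 2)^2 * (real p)^2 * q^p"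
    using ev_small eventually_ge_at_top[of "1::nat"]
  proof eventually_elim
    case (elim p)
    then show ?case unfolding \<epsilon>_def M_def using eps_bound[OF q, of p] by (simp add: mult.assoc)
  qed
  have "(\<lambda>p. 4 * (exp 2)^2 * ((real p)^2 * q^p)) \<longlonglongrightarrow> 4 * (exp 2)^2 * 0"
    by (intro tendsto_mult_left lim2 q)
  then have lim: "(\<lambda>p. 4 * (exp 2)^2 * (real p)^2 * q^p) \<longlonglongrightarrow> 0" by (simp add: mult.assoc)
  have "\<epsilon> \<longlonglongrightarrow> 0"
    by (rule tendsto_sandwich[OF lo hi tendsto_const lim])
  moreover have "\<forall>p \<ge> 1. Phi \<beta> p = \<beta> / (\<beta> + 1) * (1 + \<beta> ^ p / (\<beta> + 1) ^ (p + 1))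
                         + \<beta> ^ p / (\<beta> + 1) ^ (p + 1) * \<epsilon> p"
    unfolding x_eq q_def[symmetric] using ident by simp
  ultimately show ?thesis by blast
qed

end
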